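(* Let $(M,d)$ be a compact metric space, $\varphi:M\to M$ continuous and $\mathcal G=\{G_n\}\in\mathcal A(M)$. Then $$\lim_{\delta\downarrow0}\limsup_{n\to\infty}\sup_{x\in M}\sup_{y,z\in B_n(x,\delta)}\tfrac1n|G_n(y)-G_n(z)|=0.$$ Moreover, if integers $m_\delta(n)\in\{0,\dots,n-1\}$ satisfy $\lim_{\delta\downarrow0}\limsup_{n}\frac1nm_\delta(n)=0$, then $$\lim_{\delta\downarrow0}\limsup_{n}\tfrac1n\|G_{n-m_\delta(n)}-G_n\|_\infty=0,\qquad \lim_{\delta\downarrow0}\limsup_{n}\sup_{x\in M}\sup_{y,z\in B_{n-m_\delta(n)}(x,\delta)}\tfrac1n|G_n(y)-G_n(z)|=0.$$
   Context: $C(M),B(M)$: continuous/bounded Borel real functions with sup norm; $S_nG=\sum_{k<n}G\circ\varphi^k$; $B_n(x,\delta)=\{y:d(\varphi^ky,\varphi^kx)<\delta,\ 0\le k\le n-1\}$. $\mathcal A(M)$: sequences $\{G_n\}\subset B(M)$ for which some $\{G^{(k)}\}\subset C(M)$ has $\lim_k\limsup_nn^{-1}\|G_n-S_nG^{(k)}\|_\infty=0$. *)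

theory Defs
  imports "HOL-Analysis.Analysis"
begin

definition supnorm :: "('a \<Rightarrow> real) \<Rightarrow> real" where
  "supnorm f = (SUP x. \<bar>f x\<bar>)"

definition birkhoff_sum :: "('a \<Rightarrow> 'a) \<Rightarrow> nat \<Rightarrow> ('a \<Rightarrow> real) \<Rightarrow> 'a \<Rightarrow> real" where
  "birkhoff_sum \<phi> n G x = (\<Sum>k<n. G ((\<phi> ^^ k) x))"

definition bowen_ball :: "('a::metric_space \<Rightarrow> 'a) \<Rightarrow> nat \<Rightarrow> 'a \<Rightarrow> real \<Rightarrow> 'a set" where
  "bowen_ball \<phi> n x \<delta> = {y. \<forall>k<n. dist ((\<phi> ^^ k) y) ((\<phi> ^^ k) x) < \<delta>}"

definition bdd_borel :: "('a::topological_space \<Rightarrow> real) \<Rightarrow> bool" where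
  "bdd_borel f \<longleftrightarrow> f \<in> borel_measurable borel \<and> bounded (range f)"

definition classA :: "('a::metric_space \<Rightarrow> 'a) \<Rightarrow> (nat \<Rightarrow> 'a \<Rightarrow> real) \<Rightarrow> bool" where
  "classA \<phi> G \<longleftrightarrow> (\<forall>n. bdd_borel (G n)) \<and>
     (\<exists>Gk :: nat \<Rightarrow> 'a \<Rightarrow> real. (\<forall>k. continuous_on UNIV (Gk k)) \<and>
        (\<lambda>k. limsup (\<lambda>n. ereal (supnorm (\<lambda>x. G n x - birkhoff_sum \<phi> n (Gk k) x) / real n)))
          \<longlonglongrightarrow> 0)"

end

theory Submission
  imports Defs
begin

lemma lim_crit:
  fixes F :: "real \<Rightarrow> nat \<Rightarrow> ereal"
  assumes nonneg: "\<And>\<delta> n. \<delta> > 0 \<Longrightarrow> F \<delta> n \<ge> 0"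
  and bound: "\<And>\<epsilon>. \<epsilon> > 0 \<Longrightarrow> \<exists>d>0. \<forall>\<delta>. 0<\<delta> \<and> \<delta><d \<longrightarrow> (\<forall>\<^sub>F n in sequentially. F \<delta> n \<le> ereal \<epsilon>)"
  shows "((\<lambda>\<delta>. limsup (F \<delta>)) \<longlongrightarrow> 0) (at_right 0)"
proof (rule order_tendstoI)
  fix a :: ereal assume "a < 0"
  have "\<forall>\<^sub>F \<delta> in at_right (0::real). \<delta> > 0" by (simp add: eventually_at_right_less)
  then show "\<forall>\<^sub>F \<delta> in at_right (0::real). a < limsup (F \<delta>)"
  proof (rule eventually_mono)
    fix \<delta> :: real assume "\<delta> > 0"
    then have "0 \<le> limsup (F \<delta>)" by (intro le_Limsup) (auto simp: nonneg)
    then show "a < limsup (F \<delta>)" using \<open>a < 0\<close> by simp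
  qed
next
  fix a :: ereal assume "0 < a"
  obtain \<epsilon> where e: "\<epsilon> > 0" "ereal \<epsilon> < a"
  proof (cases a)
    case (real r) then show ?thesis using that[of "r/2"] \<open>0 < a\<close> by auto
  next
    case PInf then show ?thesis using that[of 1] by auto
  next
    case MInf then show ?thesis using \<open>0 < a\<close> by auto
  qed
  obtain d where d: "d > 0" "\<forall>\<delta>. 0<\<delta> \<and> \<delta><d \<longrightarrow> (\<forall>\<^sub>F n in sequentially. F \<delta> n \<le> ereal \<epsilon>)"
    using bound[OF e(1)] by blast
  show "\<forall>\<^sub>F \<delta> in at_right (0::real). limsup (F \<delta>) < a"
    unfolding eventually_at_right_field
  proof (intro exI[of _ d] conjI allI impI)
    fix \<delta> :: real assume "0 < \<delta>" "\<delta> < d"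
    then have "limsup (F \<delta>) \<le> ereal \<epsilon>" using d by (intro Limsup_bounded) auto
    then show "limsup (F \<delta>) < a" using e by simp
  qed (use d in auto)
qed

lemma supnorm_ge:
  assumes "\<And>x. \<bar>f x\<bar> \<le> B"
  shows "\<bar>f x\<bar> \<le> supnorm f"
  unfolding supnorm_def
  by (rule cSUP_upper) (use assms in \<open>auto intro!: bdd_aboveI2\<close>)

lemma supnorm_le:
  assumes "\<And>x. \<bar>f x\<bar> \<le> c"
  shows "supnorm f \<le> c"
  unfolding supnorm_def
  by (rule cSUP_least) (use assms in auto)

lemma bs_diff:
  assumes "\<And>u. \<bar>g u\<bar> \<le> B" "p \<le> n"
  shows "\<bar>birkhoff_sum \<phi> n g x - birkhoff_sum \<phi> p g x\<bar> \<le> real (n-p) * B"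
proof -
  have eq: "{..<n} = {..<p} \<union> {p..<n}" using assms(2) by auto
  have "(\<Sum>k<n. g ((\<phi> ^^ k) x)) = (\<Sum>k<p. g ((\<phi> ^^ k) x)) + (\<Sum>k\<in>{p..<n}. g ((\<phi> ^^ k) x))"
    by (subst eq) (rule sum.union_disjoint; auto)
  then have "birkhoff_sum \<phi> n g x - birkhoff_sum \<phi> p g x = (\<Sum>k\<in>{p..<n}. g ((\<phi> ^^ k) x))"
    unfolding birkhoff_sum_def by simp
  also have "\<bar>\<dots>\<bar> \<le> (\<Sum>k\<in>{p..<n}. \<bar>g ((\<phi> ^^ k) x)\<bar>)" by (rule sum_abs)
  also have "\<dots> \<le> (\<Sum>k\<in>{p..<n}. B)" by (intro sum_mono assms(1))
  finally show ?thesis by simp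
qed

lemma bs_close:
  assumes "\<And>u v. dist u v < r \<Longrightarrow> \<bar>g u - g v\<bar> \<le> e" "\<And>u. \<bar>g u\<bar> \<le> B" "p \<le> n"
    "\<forall>j<p. dist ((\<phi>^^j) y) ((\<phi>^^j) z) < r"
  shows "\<bar>birkhoff_sum \<phi> n g y - birkhoff_sum \<phi> n g z\<bar> \<le> real p * e + 2 * real (n-p) * B"
proof -
  have "birkhoff_sum \<phi> p g y - birkhoff_sum \<phi> p g z = (\<Sum>k<p. g ((\<phi> ^^ k) y) - g ((\<phi> ^^ k) z))"
    unfolding birkhoff_sum_def by (simp add: sum_subtractf)
  also have "\<bar>\<dots>\<bar> \<le> (\<Sum>k<p. \<bar>g ((\<phi> ^^ k) y) - g ((\<phi> ^^ k) z)\<bar>)" by (rule sum_abs)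
  also have "\<dots> \<le> (\<Sum>k<p. e)" using assms(4) by (intro sum_mono assms(1)) auto
  finally have 1: "\<bar>birkhoff_sum \<phi> p g y - birkhoff_sum \<phi> p g z\<bar> \<le> real p * e" by simp
  have 2: "\<bar>birkhoff_sum \<phi> n g y - birkhoff_sum \<phi> p g y\<bar> \<le> real (n-p) * B"
    and 3: "\<bar>birkhoff_sum \<phi> n g z - birkhoff_sum \<phi> p g z\<bar> \<le> real (n-p) * B"
    using bs_diff[of g B p n \<phi>, OF assms(2,3)] by auto
  show ?thesis using 1 2 3 by linarith
qed

lemma sup3_nonneg:
  assumes "\<delta> > 0"
  shows "0 \<le> (SUP x. SUP y\<in>bowen_ball \<phi> p x \<delta>. SUP z\<in>bowen_ball \<phi> p x \<delta>. ereal (\<bar>H y - H z\<bar> / c))"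
proof -
  fix x
  have xb: "x \<in> bowen_ball \<phi> p x \<delta>" using assms by (simp add: bowen_ball_def)
  have "0 = ereal (\<bar>H x - H x\<bar> / c)" by simp
  also have "\<dots> \<le> (SUP z\<in>bowen_ball \<phi> p x \<delta>. ereal (\<bar>H x - H z\<bar> / c))" by (rule SUP_upper[OF xb])
  also have "\<dots> \<le> (SUP y\<in>bowen_ball \<phi> p x \<delta>. SUP z\<in>bowen_ball \<phi> p x \<delta>. ereal (\<bar>H y - H z\<bar> / c))"
    by (rule SUP_upper[OF xb])
  also have "\<dots> \<le> (SUP x. SUP y\<in>bowen_ball \<phi> p x \<delta>. SUP z\<in>bowen_ball \<phi> p x \<delta>. ereal (\<bar>H y - H z\<bar> / c))"
    by (rule SUP_upper) simp
  finally show ?thesis .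
qed

lemma sup3_le:
  assumes "\<And>x y z. y \<in> bowen_ball \<phi> p x \<delta> \<Longrightarrow> z \<in> bowen_ball \<phi> p x \<delta> \<Longrightarrow> \<bar>H y - H z\<bar> / c \<le> e"
  shows "(SUP x. SUP y\<in>bowen_ball \<phi> p x \<delta>. SUP z\<in>bowen_ball \<phi> p x \<delta>. ereal (\<bar>H y - H z\<bar> / c)) \<le> ereal e"
  using assms by (intro SUP_least) auto

lemma ball_close:
  assumes "y \<in> bowen_ball \<phi> p x \<delta>" "z \<in> bowen_ball \<phi> p x \<delta>"
  shows "\<forall>j<p. dist ((\<phi>^^j) y) ((\<phi>^^j) z) < 2*\<delta>"
  using assms unfolding bowen_ball_def
  by (smt (verit, best) dist_commute dist_triangle mem_Collect_eq)

theorem lemma2p4: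
  fixes \<phi> :: "'a::metric_space \<Rightarrow> 'a" and G :: "nat \<Rightarrow> 'a \<Rightarrow> real"
  assumes "compact (UNIV :: 'a set)"
    and "continuous_on UNIV \<phi>"
    and "classA \<phi> G"
  shows "((\<lambda>\<delta>. limsup (\<lambda>n. SUP x. SUP y\<in>bowen_ball \<phi> n x \<delta>. SUP z\<in>bowen_ball \<phi> n x \<delta>.
             ereal (\<bar>G n y - G n z\<bar> / real n))) \<longlongrightarrow> 0) (at_right 0)
    \<and> (\<forall>m :: real \<Rightarrow> nat \<Rightarrow> nat.
         (\<forall>\<delta>>0. \<forall>n>0. m \<delta> n < n) \<and>
         ((\<lambda>\<delta>. limsup (\<lambda>n. ereal (real (m \<delta> n) / real n))) \<longlongrightarrow> 0) (at_right 0)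
         \<longrightarrow>
         ((\<lambda>\<delta>. limsup (\<lambda>n. ereal (supnorm (\<lambda>x. G (n - m \<delta> n) x - G n x) / real n)))
            \<longlongrightarrow> 0) (at_right 0)
         \<and> ((\<lambda>\<delta>. limsup (\<lambda>n. SUP x. SUP y\<in>bowen_ball \<phi> (n - m \<delta> n) x \<delta>.
                SUP z\<in>bowen_ball \<phi> (n - m \<delta> n) x \<delta>. ereal (\<bar>G n y - G n z\<bar> / real n)))
            \<longlongrightarrow> 0) (at_right 0))"
proof -
  obtain Gk where Gkc: "\<And>k. continuous_on UNIV (Gk k)"
    and Lt: "(\<lambda>k. limsup (\<lambda>n. ereal (supnorm (\<lambda>x. G n x - birkhoff_sum \<phi> n (Gk k) x) / real n))) \<longlonglongrightarrow> 0"
    and bdG: "\<And>n. bdd_borel (G n)"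
    using assms(3) unfolding classA_def by blast
  have GB: "\<exists>B. \<forall>x. \<bar>G n x\<bar> \<le> B" for n
    using bdG[of n] unfolding bdd_borel_def bounded_iff by auto
  have KB: "\<exists>B. \<forall>x. \<bar>Gk k x\<bar> \<le> B" for k
  proof -
    have "compact (Gk k ` UNIV)" by (rule compact_continuous_image[OF Gkc assms(1)])
    then have "bounded (range (Gk k))" by (rule compact_imp_bounded)
    then show ?thesis unfolding bounded_iff by auto
  qed
  have SB: "\<bar>birkhoff_sum \<phi> n g x\<bar> \<le> real n * B" if "\<And>u. \<bar>g u\<bar> \<le> B" for g B n x
    using bs_diff[of g B 0 n \<phi> x, OF that] by (simp add: birkhoff_sum_def)
  define a where "a k n = supnorm (\<lambda>x. G n x - birkhoff_sum \<phi> n (Gk k) x)" for k n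
  have a_ge: "\<bar>G n x - birkhoff_sum \<phi> n (Gk k) x\<bar> \<le> a k n" for k n x
  proof -
    obtain B1 where B1: "\<forall>x. \<bar>G n x\<bar> \<le> B1" using GB by blast
    obtain B2 where B2: "\<forall>x. \<bar>Gk k x\<bar> \<le> B2" using KB by blast
    have "\<bar>G n x - birkhoff_sum \<phi> n (Gk k) x\<bar> \<le> B1 + real n * B2" for x
    proof -
      have "\<bar>G n x\<bar> \<le> B1" using B1 by blast
      moreover have "\<bar>birkhoff_sum \<phi> n (Gk k) x\<bar> \<le> real n * B2" using SB[of "Gk k" B2 n x] B2 by blast
      moreover have "\<bar>G n x - birkhoff_sum \<phi> n (Gk k) x\<bar> \<le> \<bar>G n x\<bar> + \<bar>birkhoff_sum \<phi> n (Gk k) x\<bar>"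
        by (rule abs_triangle_ineq4)
      ultimately show ?thesis by linarith
    qed
    then show ?thesis unfolding a_def by (rule supnorm_ge)
  qed
  have aev: "\<exists>k N. \<forall>n\<ge>N. a k n \<le> e * real n" if "e > 0" for e
  proof -
    have "\<forall>\<^sub>F k in sequentially. limsup (\<lambda>n. ereal (a k n / real n)) < ereal e"
      using order_tendstoD(2)[OF Lt, of "ereal e"] that unfolding a_def by simp
    then obtain k where "limsup (\<lambda>n. ereal (a k n / real n)) < ereal e"
      unfolding eventually_sequentially by blast
    then have "\<forall>\<^sub>F n in sequentially. ereal (a k n / real n) < ereal e" by (rule Limsup_lessD)
    then obtain N where N: "\<forall>n\<ge>N. a k n / real n < e" unfolding eventually_sequentially by auto
    have "\<forall>n\<ge>max N 1. a k n \<le> e * real n"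
    proof (intro allI impI)
      fix n assume "max N 1 \<le> n"
      then have "a k n / real n < e" "real n > 0" using N by auto
      then show "a k n \<le> e * real n" by (simp add: pos_divide_less_eq less_imp_le)
    qed
    then show ?thesis by blast
  qed
  have uc: "\<exists>r>0. \<forall>u v. dist u v < r \<longrightarrow> \<bar>Gk k u - Gk k v\<bar> \<le> e" if e0: "e > 0" for k e
  proof -
    have "uniformly_continuous_on UNIV (Gk k)"
      by (rule compact_uniformly_continuous[OF Gkc assms(1)])
    then obtain r where "r > 0" "\<forall>u v. dist u v < r \<longrightarrow> dist (Gk k u) (Gk k v) < e"
      unfolding uniformly_continuous_on_def using e0 by blast
    then have "\<forall>u v. dist u v < r \<longrightarrow> \<bar>Gk k u - Gk k v\<bar> \<le> e"
      by (simp add: dist_real_def order_less_imp_le)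
    then show ?thesis using \<open>r > 0\<close> by blast
  qed
  have P1: "((\<lambda>\<delta>. limsup (\<lambda>n. SUP x. SUP y\<in>bowen_ball \<phi> n x \<delta>. SUP z\<in>bowen_ball \<phi> n x \<delta>.
             ereal (\<bar>G n y - G n z\<bar> / real n))) \<longlongrightarrow> 0) (at_right 0)"
  proof (rule lim_crit)
    fix \<delta> :: real and n assume "\<delta> > 0"
    then show "0 \<le> (SUP x. SUP y\<in>bowen_ball \<phi> n x \<delta>. SUP z\<in>bowen_ball \<phi> n x \<delta>.
             ereal (\<bar>G n y - G n z\<bar> / real n))" by (rule sup3_nonneg)
  next
    fix \<epsilon> :: real assume "\<epsilon> > 0"
    define e where "e = \<epsilon> / 3"
    have e: "e > 0" using \<open>\<epsilon> > 0\<close> by (simp add: e_def)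
    obtain k N where N: "\<forall>n\<ge>N. a k n \<le> e * real n" using aev[OF e] by blast
    obtain B where B: "\<forall>u. \<bar>Gk k u\<bar> \<le> B" using KB by blast
    obtain r where r: "r > 0" "\<forall>u v. dist u v < r \<longrightarrow> \<bar>Gk k u - Gk k v\<bar> \<le> e" using uc[OF e] by blast
    show "\<exists>d>0. \<forall>\<delta>. 0 < \<delta> \<and> \<delta> < d \<longrightarrow> (\<forall>\<^sub>F n in sequentially.
      (SUP x. SUP y\<in>bowen_ball \<phi> n x \<delta>. SUP z\<in>bowen_ball \<phi> n x \<delta>. ereal (\<bar>G n y - G n z\<bar> / real n)) \<le> ereal \<epsilon>)"
    proof (intro exI[of _ "r/2"] conjI allI impI)
      fix \<delta> :: real assume \<delta>: "0 < \<delta> \<and> \<delta> < r/2"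
      show "\<forall>\<^sub>F n in sequentially.
      (SUP x. SUP y\<in>bowen_ball \<phi> n x \<delta>. SUP z\<in>bowen_ball \<phi> n x \<delta>. ereal (\<bar>G n y - G n z\<bar> / real n)) \<le> ereal \<epsilon>"
        unfolding eventually_sequentially
      proof (intro exI[of _ "max N 1"] allI impI sup3_le)
        fix n x y z assume n: "max N 1 \<le> n" and y: "y \<in> bowen_ball \<phi> n x \<delta>" and z: "z \<in> bowen_ball \<phi> n x \<delta>"
        have cl: "\<forall>j<n. dist ((\<phi>^^j) y) ((\<phi>^^j) z) < r" using ball_close[OF y z] \<delta> by force
        have "\<bar>birkhoff_sum \<phi> n (Gk k) y - birkhoff_sum \<phi> n (Gk k) z\<bar> \<le> real n * e + 2 * real (n-n) * B"
          by (rule bs_close[where r=r]) (use r B cl in auto)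
        moreover have "\<bar>G n y - birkhoff_sum \<phi> n (Gk k) y\<bar> \<le> a k n" "\<bar>G n z - birkhoff_sum \<phi> n (Gk k) z\<bar> \<le> a k n"
          by (rule a_ge)+
        moreover have "a k n \<le> e * real n" using N n by auto
        ultimately have "\<bar>G n y - G n z\<bar> \<le> real n * e + 2 * real (n-n) * B + 2 * a k n"
          by linarith
        moreover have "real n * e + 2 * real (n-n) * B = e * real n" by simp
        moreover have "\<epsilon> * real n = 3 * (e * real n)" by (simp add: e_def)
        ultimately have "\<bar>G n y - G n z\<bar> \<le> \<epsilon> * real n" using \<open>a k n \<le> e * real n\<close> by linarith
        moreover have "real n > 0" using n by auto
        ultimately show "\<bar>G n y - G n z\<bar> / real n \<le> \<epsilon>" by (simp add: pos_divide_le_eq)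
      qed
    qed (use r in auto)
  qed
  show ?thesis
  proof (intro conjI P1 allI impI; elim conjE)
    fix m :: "real \<Rightarrow> nat \<Rightarrow> nat"
    assume mh: "((\<lambda>\<delta>. limsup (\<lambda>n. ereal (real (m \<delta> n) / real n))) \<longlongrightarrow> 0) (at_right 0)"
    have key: "\<exists>k N B d. d > 0 \<and> (\<forall>u. \<bar>Gk k u\<bar> \<le> B) \<and> (\<forall>n\<ge>N. a k n \<le> e * real n) \<and>
       (\<forall>\<delta>. 0 < \<delta> \<and> \<delta> < d \<longrightarrow> (\<forall>\<^sub>F n in sequentially. n > 0 \<and> N \<le> n - m \<delta> n \<and> m \<delta> n \<le> n
           \<and> real (m \<delta> n) * B \<le> e * real n))" if e: "e > 0" for e
    proof -
      obtain k N where N: "\<forall>n\<ge>N. a k n \<le> e * real n" using aev[OF e] by blast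
      obtain B where B: "\<forall>u. \<bar>Gk k u\<bar> \<le> B" using KB by blast
      have B0: "B \<ge> 0" using B[rule_format, of undefined] by linarith
      define \<eta> where "\<eta> = min (1/2) (e / (B+1))"
      have \<eta>0: "\<eta> > 0" using e B0 by (simp add: \<eta>_def)
      have "\<eta> \<le> e / (B+1)" by (simp add: \<eta>_def)
      then have "\<eta> * (B+1) \<le> e" using B0 by (subst (asm) pos_le_divide_eq) auto
      moreover have "\<eta> * (B+1) = \<eta> * B + \<eta>" by (simp add: algebra_simps)
      ultimately have \<eta>B: "\<eta> * B \<le> e" using \<eta>0 by linarith
      have "\<forall>\<^sub>F \<delta> in at_right 0. limsup (\<lambda>n. ereal (real (m \<delta> n) / real n)) < ereal \<eta>"
        using order_tendstoD(2)[OF mh, of "ereal \<eta>"] \<eta>0 by simp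
      then obtain d where d: "d > 0" "\<forall>\<delta>>0. \<delta> < d \<longrightarrow> limsup (\<lambda>n. ereal (real (m \<delta> n) / real n)) < ereal \<eta>"
        unfolding eventually_at_right_field by auto
      have "\<forall>\<^sub>F n in sequentially. n > 0 \<and> N \<le> n - m \<delta> n \<and> m \<delta> n \<le> n
           \<and> real (m \<delta> n) * B \<le> e * real n" if \<delta>: "0 < \<delta> \<and> \<delta> < d" for \<delta>
      proof -
        have "\<forall>\<^sub>F n in sequentially. ereal (real (m \<delta> n) / real n) < ereal \<eta>"
          using d \<delta> by (intro Limsup_lessD) auto
        moreover have "\<forall>\<^sub>F n in sequentially. 2 * N + 1 \<le> n" by (rule eventually_ge_at_top)
        ultimately show ?thesis
        proof (rule eventually_mono[OF eventually_conj])
          fix n assume h: "ereal (real (m \<delta> n) / real n) < ereal \<eta> \<and> 2 * N + 1 \<le> n"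
          then have n0: "real n > 0" by auto
          have "real (m \<delta> n) < \<eta> * real n" using h n0 by (simp add: pos_divide_less_eq)
          then have mle: "real (m \<delta> n) \<le> \<eta> * real n" by simp
          have "\<eta> \<le> 1/2" unfolding \<eta>_def by (rule min.cobounded1)
          then have "\<eta> * real n \<le> 1/2 * real n" by (rule mult_right_mono) simp
          then have "\<eta> * real n \<le> real n / 2" by simp
          then have m2: "real (m \<delta> n) \<le> real n / 2" using mle by linarith
          have "real (2 * N + 1) \<le> real n" using h by linarith
          then have "N \<le> n - m \<delta> n" using m2 by linarith
          moreover have "m \<delta> n \<le> n" using m2 n0 by linarith
          moreover have "real (m \<delta> n) * B \<le> \<eta> * real n * B" using mle B0 by (rule mult_right_mono)
          moreover have "\<eta> * real n * B = (\<eta> * B) * real n" by (simp add: mult_ac)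
          moreover have "(\<eta> * B) * real n \<le> e * real n" using \<eta>B by (rule mult_right_mono) simp
          ultimately show "n > 0 \<and> N \<le> n - m \<delta> n \<and> m \<delta> n \<le> n \<and> real (m \<delta> n) * B \<le> e * real n"
            using n0 by linarith
        qed
      qed
      then show ?thesis using d N B by blast
    qed
    show "((\<lambda>\<delta>. limsup (\<lambda>n. ereal (supnorm (\<lambda>x. G (n - m \<delta> n) x - G n x) / real n))) \<longlongrightarrow> 0) (at_right 0)"
    proof (rule lim_crit)
      fix \<delta> :: real and n
      obtain B1 where B1: "\<forall>x. \<bar>G (n - m \<delta> n) x\<bar> \<le> B1" using GB by blast
      obtain B2 where B2: "\<forall>x. \<bar>G n x\<bar> \<le> B2" using GB by blast
      have "\<bar>G (n - m \<delta> n) x - G n x\<bar> \<le> B1 + B2" for x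
        using B1[rule_format, of x] B2[rule_format, of x] abs_triangle_ineq4[of "G (n - m \<delta> n) x" "G n x"] by linarith
      then have "\<bar>G (n - m \<delta> n) undefined - G n undefined\<bar> \<le> supnorm (\<lambda>x. G (n - m \<delta> n) x - G n x)"
        by (rule supnorm_ge)
      then have "0 \<le> supnorm (\<lambda>x. G (n - m \<delta> n) x - G n x)" by linarith
      then show "0 \<le> ereal (supnorm (\<lambda>x. G (n - m \<delta> n) x - G n x) / real n)" by simp
    next
      fix \<epsilon> :: real assume "\<epsilon> > 0"
      define e where "e = \<epsilon> / 5"
      have e: "e > 0" using \<open>\<epsilon> > 0\<close> by (simp add: e_def)
      obtain k N B d where d: "d > 0" and B: "\<forall>u. \<bar>Gk k u\<bar> \<le> B" and N: "\<forall>n\<ge>N. a k n \<le> e * real n"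
        and ev: "\<forall>\<delta>. 0 < \<delta> \<and> \<delta> < d \<longrightarrow> (\<forall>\<^sub>F n in sequentially. n > 0 \<and> N \<le> n - m \<delta> n \<and> m \<delta> n \<le> n
           \<and> real (m \<delta> n) * B \<le> e * real n)"
        using key[OF e] by blast
      show "\<exists>d>0. \<forall>\<delta>. 0 < \<delta> \<and> \<delta> < d \<longrightarrow> (\<forall>\<^sub>F n in sequentially.
         ereal (supnorm (\<lambda>x. G (n - m \<delta> n) x - G n x) / real n) \<le> ereal \<epsilon>)"
      proof (intro exI[of _ d] conjI allI impI)
        fix \<delta> :: real assume \<delta>: "0 < \<delta> \<and> \<delta> < d"
        show "\<forall>\<^sub>F n in sequentially. ereal (supnorm (\<lambda>x. G (n - m \<delta> n) x - G n x) / real n) \<le> ereal \<epsilon>"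
        proof (rule eventually_mono[OF ev[rule_format, OF \<delta>]])
          fix n assume h: "n > 0 \<and> N \<le> n - m \<delta> n \<and> m \<delta> n \<le> n \<and> real (m \<delta> n) * B \<le> e * real n"
          define p where "p = n - m \<delta> n"
          have pn: "p \<le> n" "N \<le> p" "real (n - p) = real (m \<delta> n)" using h by (auto simp: p_def)
          have "a k p \<le> e * real p" using N pn by auto
          also have "\<dots> \<le> e * real n" using pn e by simp
          finally have ap: "a k p \<le> e * real n" .
          have an: "a k n \<le> e * real n" using N pn by auto
          have "\<bar>G p x - G n x\<bar> \<le> \<epsilon> * real n" for x
          proof -
            have "\<bar>birkhoff_sum \<phi> n (Gk k) x - birkhoff_sum \<phi> p (Gk k) x\<bar> \<le> real (n-p) * B"
              by (rule bs_diff) (use B pn in auto)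
            moreover have "\<bar>G n x - birkhoff_sum \<phi> n (Gk k) x\<bar> \<le> a k n" "\<bar>G p x - birkhoff_sum \<phi> p (Gk k) x\<bar> \<le> a k p"
              by (rule a_ge)+
            ultimately have "\<bar>G p x - G n x\<bar> \<le> a k p + real (n-p) * B + a k n" by linarith
            moreover have "real (n-p) * B \<le> e * real n" using h pn by simp
            moreover have "\<epsilon> * real n = 5 * (e * real n)" by (simp add: e_def)
            moreover have "e * real n \<ge> 0" using e by simp
            ultimately show ?thesis using ap an by linarith
          qed
          then have "supnorm (\<lambda>x. G p x - G n x) \<le> \<epsilon> * real n" by (rule supnorm_le)
          then show "ereal (supnorm (\<lambda>x. G (n - m \<delta> n) x - G n x) / real n) \<le> ereal \<epsilon>"
            using h by (simp add: p_def pos_divide_le_eq)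
        qed
      qed (use d in auto)
    qed
    show "((\<lambda>\<delta>. limsup (\<lambda>n. SUP x. SUP y\<in>bowen_ball \<phi> (n - m \<delta> n) x \<delta>.
                SUP z\<in>bowen_ball \<phi> (n - m \<delta> n) x \<delta>. ereal (\<bar>G n y - G n z\<bar> / real n)))
            \<longlongrightarrow> 0) (at_right 0)"
    proof (rule lim_crit)
      fix \<delta> :: real and n assume "\<delta> > 0"
      then show "0 \<le> (SUP x. SUP y\<in>bowen_ball \<phi> (n - m \<delta> n) x \<delta>.
                SUP z\<in>bowen_ball \<phi> (n - m \<delta> n) x \<delta>. ereal (\<bar>G n y - G n z\<bar> / real n))"
        by (rule sup3_nonneg)
    next
      fix \<epsilon> :: real assume "\<epsilon> > 0"
      define e where "e = \<epsilon> / 5"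
      have e: "e > 0" using \<open>\<epsilon> > 0\<close> by (simp add: e_def)
      obtain k N B d where d: "d > 0" and B: "\<forall>u. \<bar>Gk k u\<bar> \<le> B" and N: "\<forall>n\<ge>N. a k n \<le> e * real n"
        and ev: "\<forall>\<delta>. 0 < \<delta> \<and> \<delta> < d \<longrightarrow> (\<forall>\<^sub>F n in sequentially. n > 0 \<and> N \<le> n - m \<delta> n \<and> m \<delta> n \<le> n
           \<and> real (m \<delta> n) * B \<le> e * real n)"
        using key[OF e] by blast
      obtain r where r: "r > 0" "\<forall>u v. dist u v < r \<longrightarrow> \<bar>Gk k u - Gk k v\<bar> \<le> e" using uc[OF e] by blast
      show "\<exists>d>0. \<forall>\<delta>. 0 < \<delta> \<and> \<delta> < d \<longrightarrow> (\<forall>\<^sub>F n in sequentially.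
         (SUP x. SUP y\<in>bowen_ball \<phi> (n - m \<delta> n) x \<delta>.
                SUP z\<in>bowen_ball \<phi> (n - m \<delta> n) x \<delta>. ereal (\<bar>G n y - G n z\<bar> / real n)) \<le> ereal \<epsilon>)"
      proof (intro exI[of _ "min d (r/2)"] conjI allI impI)
        fix \<delta> :: real assume \<delta>: "0 < \<delta> \<and> \<delta> < min d (r/2)"
        then have \<delta>': "0 < \<delta> \<and> \<delta> < d" by auto
        show "\<forall>\<^sub>F n in sequentially. (SUP x. SUP y\<in>bowen_ball \<phi> (n - m \<delta> n) x \<delta>.
                SUP z\<in>bowen_ball \<phi> (n - m \<delta> n) x \<delta>. ereal (\<bar>G n y - G n z\<bar> / real n)) \<le> ereal \<epsilon>"
        proof (rule eventually_mono[OF ev[rule_format, OF \<delta>']])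
          fix n assume h: "n > 0 \<and> N \<le> n - m \<delta> n \<and> m \<delta> n \<le> n \<and> real (m \<delta> n) * B \<le> e * real n"
          define p where "p = n - m \<delta> n"
          have pn: "p \<le> n" "N \<le> p" "real (n - p) = real (m \<delta> n)" using h by (auto simp: p_def)
          have an: "a k n \<le> e * real n" using N pn by auto
          have pe: "real p * e \<le> real n * e" using pn e by simp
          show "(SUP x. SUP y\<in>bowen_ball \<phi> (n - m \<delta> n) x \<delta>.
                SUP z\<in>bowen_ball \<phi> (n - m \<delta> n) x \<delta>. ereal (\<bar>G n y - G n z\<bar> / real n)) \<le> ereal \<epsilon>"
            unfolding p_def[symmetric]
          proof (rule sup3_le)
            fix x y z assume y: "y \<in> bowen_ball \<phi> p x \<delta>" and z: "z \<in> bowen_ball \<phi> p x \<delta>"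
            have cl: "\<forall>j<p. dist ((\<phi>^^j) y) ((\<phi>^^j) z) < r" using ball_close[OF y z] \<delta> by force
            have "\<bar>birkhoff_sum \<phi> n (Gk k) y - birkhoff_sum \<phi> n (Gk k) z\<bar> \<le> real p * e + 2 * real (n-p) * B"
              by (rule bs_close[where r=r]) (use r B cl pn in auto)
            moreover have "\<bar>G n y - birkhoff_sum \<phi> n (Gk k) y\<bar> \<le> a k n" "\<bar>G n z - birkhoff_sum \<phi> n (Gk k) z\<bar> \<le> a k n"
              by (rule a_ge)+
            ultimately have "\<bar>G n y - G n z\<bar> \<le> real p * e + 2 * real (n-p) * B + 2 * a k n" by linarith
            moreover have "real (n-p) * B \<le> e * real n" using h pn by simp
            moreover have "\<epsilon> * real n = 5 * (e * real n)" by (simp add: e_def)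
            moreover have "real n * e = e * real n" by simp
            ultimately have "\<bar>G n y - G n z\<bar> \<le> \<epsilon> * real n" using an pe by linarith
            then show "\<bar>G n y - G n z\<bar> / real n \<le> \<epsilon>" using h by (simp add: pos_divide_le_eq)
          qed
        qed
      qed (use d r in auto)
    qed
  qed
qed

end
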